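(* Let $A\subset\mathbb{Z}$ be the union of $s$ segments $P_1,\dots,P_s$ (so $\max P_i+1<\min P_{i+1}$ for $1\le i<s$), where $1\le s\le |A|-1$. Let $S_A$ be the integer matrix with $s$ columns whose rows are all vectors $\mathbf e_{j_1}+\mathbf e_{j_2}-\mathbf e_{j_3}-\mathbf e_{j_4}\in\mathbb{Z}^s$ such that $(P_{j_1}+P_{j_2})\cap(P_{j_3}+P_{j_4})\neq\emptyset$ and not all of $j_1,j_2,j_3,j_4$ are equal. Then $\dim(A)=s-\mathrm{rank}(S_A)$.
   Context: A segment is a nonempty set of consecutive integers. $A\subset\mathbb{Z}$ is the union of $s$ segments if $A=P_1\cup\dots\cup P_s$ with each $P_i$ a segment of length $k_i$, $\max P_i+1<\min P_{i+1}$ for $1\le i<s$, and $k_i>1$ for some $i$. $\mathbf e_i$ denotes the $i$-th standard basis vector. Sets $A\subset G$, $B\subset G'$ in abelian groups are Freiman isomorphic of order 2 if there is a bijection $\phi:A\to B$ with $x+y=z+t\iff\phi(x)+\phi(y)=\phi(z)+\phi(t)$ for all $x,y,z,t\in A$. The dimension $\dim(A)$ is the largest $d$ such that some $B\subset\mathbb{Z}^d$ not contained in a hyperplane is Freiman isomorphic of order 2 to $A$. *)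

theory Defs
  imports Main "HOL-Library.Function_Algebras" "Jordan_Normal_Form.DL_Rank"
begin

definition freiman_iso2 :: "'a::ab_group_add set \<Rightarrow> 'b::ab_group_add set \<Rightarrow> bool" where
  "freiman_iso2 A B \<longleftrightarrow> (\<exists>\<phi>. bij_betw \<phi> A B \<and>
     (\<forall>x\<in>A. \<forall>y\<in>A. \<forall>z\<in>A. \<forall>t\<in>A. x + y = z + t \<longleftrightarrow> \<phi> x + \<phi> y = \<phi> z + \<phi> t))"

text \<open>Z^d is modelled as integer vectors nat => int vanishing outside {0..<d}.\<close>
definition intvecs :: "nat \<Rightarrow> (nat \<Rightarrow> int) set" where
  "intvecs d = {v. \<forall>i\<ge>d. v i = 0}"

definition in_hyperplane :: "nat \<Rightarrow> (nat \<Rightarrow> int) set \<Rightarrow> bool" where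
  "in_hyperplane d B \<longleftrightarrow> (\<exists>c :: nat \<Rightarrow> real. \<exists>\<alpha>. (\<exists>i<d. c i \<noteq> 0) \<and>
     (\<forall>b\<in>B. (\<Sum>i<d. c i * real_of_int (b i)) = \<alpha>))"

definition freiman_dim :: "int set \<Rightarrow> nat" where
  "freiman_dim A = (GREATEST d. \<exists>B. B \<subseteq> intvecs d \<and> \<not> in_hyperplane d B \<and> freiman_iso2 A B)"

definition sumset :: "int set \<Rightarrow> int set \<Rightarrow> int set" where
  "sumset X Y = {x + y | x y. x \<in> X \<and> y \<in> Y}"

text \<open>Segments P_j = {a j..b j}, j < s (0-indexed). The rows of S_A: all
  e_j1 + e_j2 - e_j3 - e_j4 (in Z^s, as rational vectors) with
  (P_j1+P_j2) meeting (P_j3+P_j4) and not all j's equal (duplicates are harmless for rank).\<close>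
definition S_rows :: "nat \<Rightarrow> (nat \<Rightarrow> int) \<Rightarrow> (nat \<Rightarrow> int) \<Rightarrow> rat vec list" where
  "S_rows s a b = [vec s (\<lambda>i. of_int ((if i = j1 then 1 else 0) + (if i = j2 then 1 else 0)
                               - (if i = j3 then 1 else 0) - (if i = j4 then 1 else 0))).
      j1 \<leftarrow> [0..<s], j2 \<leftarrow> [0..<s], j3 \<leftarrow> [0..<s], j4 \<leftarrow> [0..<s],
      sumset {a j1..b j1} {a j2..b j2} \<inter> sumset {a j3..b j3} {a j4..b j4} \<noteq> {} \<and>
      \<not> (j1 = j2 \<and> j2 = j3 \<and> j3 = j4)]"

definition S_mat :: "nat \<Rightarrow> (nat \<Rightarrow> int) \<Rightarrow> (nat \<Rightarrow> int) \<Rightarrow> rat mat" where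
  "S_mat s a b = mat_of_rows s (S_rows s a b)"

definition mat_rank :: "rat mat \<Rightarrow> nat" where
  "mat_rank M = vec_space.rank (dim_row M) M"

end

theory Submission
  imports Defs
begin

lemma core:
  fixes S :: "rat mat"
  assumes S: "S \<in> carrier_mat m s"
  obtains F where "F \<subseteq> {..<s}" "card F = s - vec_space.rank m S"
   "\<And>f. f \<in> F \<Longrightarrow> \<exists>w. S *\<^sub>v vec s w = 0\<^sub>v m \<and> w f = 1 \<and> (\<forall>f'\<in>F. f' \<noteq> f \<longrightarrow> w f' = 0)"
   "\<And>w. S *\<^sub>v vec s w = 0\<^sub>v m \<Longrightarrow> (\<forall>f\<in>F. w f = 0) \<Longrightarrow> \<forall>j<s. w j = 0"
proof -
  interpret V: vec_space "TYPE(rat)" m .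
  have colsC: "set (cols S) \<subseteq> carrier_vec m" using S cols_dim by blast
  obtain U where U: "maximal U (\<lambda>T. T \<subseteq> set (cols S) \<and> V.lin_indpt T)"
    using maximal_exists[of "(\<lambda>T. T \<subseteq> set (cols S) \<and> V.lin_indpt T)" "card (set (cols S))" "{}"]
    by (meson List.finite_set card_mono empty_iff empty_subsetI V.finite_lin_indpt2 rev_finite_subset)
  have rk: "V.rank S = card U" using V.rank_card_indpt[OF S U] .
  have Usub: "U \<subseteq> set (cols S)" and Uli: "V.lin_indpt U" using U unfolding maximal_def by auto
  have finU: "finite U" using Usub finite_subset by blast
  have UC: "U \<subseteq> carrier_vec m" using Usub colsC by blast
  define idx where "idx u = (SOME j. j < s \<and> col S j = u)" for u
  have idx: "idx u < s \<and> col S (idx u) = u" if "u \<in> U" for u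
  proof -
    from that Usub obtain j where "j < length (cols S)" "cols S ! j = u" by (metis in_set_conv_nth subsetD)
    hence "j < s \<and> col S j = u" using S by auto
    thus ?thesis unfolding idx_def by (rule someI)
  qed
  have inj: "inj_on idx U" by (metis idx inj_onI)
  define J where "J = idx ` U"
  have J: "J \<subseteq> {..<s}" using idx J_def by auto
  have cJ: "card J = card U" unfolding J_def using card_image[OF inj] .
  define F where "F = {..<s} - J"
  have cF: "card F = s - V.rank S" unfolding F_def rk
    by (simp add: card_Diff_subset[OF finite_subset[OF J] J] cJ)
  have mv: "(S *\<^sub>v vec s w) $ i = (\<Sum>j<s. w j * col S j $ i)" if "i < m" for w i
    using S that by (auto simp: mult_mat_vec_def scalar_prod_def lessThan_atLeast0 intro!: sum.cong)
  have sumJ: "(\<Sum>j\<in>J. g j) = (\<Sum>u\<in>U. g (idx u))" for g :: "nat \<Rightarrow> rat"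
    unfolding J_def using sum.reindex[OF inj] by simp
  have P2: "\<forall>j<s. w j = 0" if w: "S *\<^sub>v vec s w = 0\<^sub>v m" and wF: "\<forall>f\<in>F. w f = 0" for w
  proof -
    have "V.lincomb (\<lambda>u. w (idx u)) U = 0\<^sub>v m"
    proof (rule eq_vecI)
      show "dim_vec (V.lincomb (\<lambda>u. w (idx u)) U) = dim_vec (0\<^sub>v m)"
        using V.lincomb_dim[OF finU UC] by simp
      fix i assume "i < dim_vec (0\<^sub>v m)" hence i: "i < m" by simp
      have "0 = (S *\<^sub>v vec s w) $ i" using w i by simp
      also have "\<dots> = (\<Sum>j<s. w j * col S j $ i)" using mv[OF i] .
      also have "\<dots> = (\<Sum>j\<in>J. w j * col S j $ i)"
        by (rule sum.mono_neutral_right) (use J wF F_def in auto)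
      also have "\<dots> = (\<Sum>u\<in>U. w (idx u) * u $ i)" unfolding sumJ using idx by (auto intro!: sum.cong)
      also have "\<dots> = V.lincomb (\<lambda>u. w (idx u)) U $ i" using V.lincomb_index[OF i UC] by simp
      finally show "V.lincomb (\<lambda>u. w (idx u)) U $ i = 0\<^sub>v m $ i" using i by simp
    qed
    hence "w (idx u) = 0" if "u \<in> U" for u
      using Uli that finU unfolding V.lin_dep_def by (auto simp: class_field_def)
    thus ?thesis using wF F_def J_def by auto
  qed
  have P1: "\<exists>w. S *\<^sub>v vec s w = 0\<^sub>v m \<and> w f = 1 \<and> (\<forall>f'\<in>F. f' \<noteq> f \<longrightarrow> w f' = 0)"
    if f: "f \<in> F" for f
  proof -
    have fs: "f < s" "f \<notin> J" using f F_def by auto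
    define v where "v = col S f"
    have vC: "v \<in> carrier_vec m" using S fs v_def by auto
    have vcols: "v \<in> set (cols S)" using S fs v_def by (auto simp: in_set_conv_nth intro!: exI[of _ f])
    have "v \<in> V.span U"
    proof (cases "v \<in> U")
      case True thus ?thesis using V.span_mem[OF UC] by auto
    next
      case False
      have "V.lin_dep (U \<union> {v})"
      proof (rule ccontr)
        assume "\<not> V.lin_dep (U \<union> {v})"
        hence "U \<union> {v} = U" using U vcols Usub unfolding maximal_def by blast
        thus False using False by auto
      qed
      thus ?thesis using V.lin_dep_iff_in_span[OF UC Uli vC False] by simp
    qed
    then obtain a where a: "v = V.lincomb a U"
      using V.finite_span[OF finU UC] by auto
    define w where "w j = (if j = f then 1 else if j \<in> J then - a (col S j) else 0)" for j
    have "S *\<^sub>v vec s w = 0\<^sub>v m"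
    proof (rule eq_vecI)
      show "dim_vec (S *\<^sub>v vec s w) = dim_vec (0\<^sub>v m)" using S by simp
      fix i assume "i < dim_vec (0\<^sub>v m)" hence i: "i < m" by simp
      have "(S *\<^sub>v vec s w) $ i = (\<Sum>j<s. w j * col S j $ i)" using mv[OF i] .
      also have "\<dots> = (\<Sum>j\<in>insert f J. w j * col S j $ i)"
        by (rule sum.mono_neutral_right) (use J fs w_def in auto)
      also have "\<dots> = v $ i + (\<Sum>j\<in>J. w j * col S j $ i)"
        using fs finite_subset[OF J] by (simp add: w_def v_def)
      also have "(\<Sum>j\<in>J. w j * col S j $ i) = (\<Sum>u\<in>U. - (a u * u $ i))"
        unfolding sumJ using idx fs by (auto simp: w_def J_def intro!: sum.cong)
      also have "\<dots> = - V.lincomb a U $ i" using V.lincomb_index[OF i UC] by (simp add: sum_negf)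
      finally show "(S *\<^sub>v vec s w) $ i = 0\<^sub>v m $ i" using i a by simp
    qed
    moreover have "\<forall>f'\<in>F. f' \<noteq> f \<longrightarrow> w f' = 0" using F_def w_def by auto
    ultimately show ?thesis using w_def by auto
  qed
  show ?thesis
    by (rule that[of F]) (use F_def cF P1 P2 in auto)
qed

definition kerS :: "nat \<Rightarrow> (nat\<Rightarrow>int) \<Rightarrow> (nat\<Rightarrow>int) \<Rightarrow> (nat \<Rightarrow> rat) \<Rightarrow> bool" where
 "kerS s a b w \<longleftrightarrow> (\<forall>j1<s. \<forall>j2<s. \<forall>j3<s. \<forall>j4<s.
    sumset {a j1..b j1} {a j2..b j2} \<inter> sumset {a j3..b j3} {a j4..b j4} \<noteq> {} \<longrightarrow> w j1 + w j2 = w j3 + w j4)"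

lemma memS1: "r \<in> set (S_rows s a b) \<Longrightarrow> \<exists>j1 j2 j3 j4. j1 < s \<and> j2 < s \<and> j3 < s \<and> j4 < s \<and>
      sumset {a j1..b j1} {a j2..b j2} \<inter> sumset {a j3..b j3} {a j4..b j4} \<noteq> {} \<and>
      r = vec s (\<lambda>i. of_int ((if i = j1 then 1 else 0) + (if i = j2 then 1 else 0)
                               - (if i = j3 then 1 else 0) - (if i = j4 then 1 else 0)))"
  unfolding S_rows_def
  by (clarsimp simp del: of_int_add of_int_diff) blast
lemma memS2: "j1 < s \<Longrightarrow> j2 < s \<Longrightarrow> j3 < s \<Longrightarrow> j4 < s \<Longrightarrow>
      sumset {a j1..b j1} {a j2..b j2} \<inter> sumset {a j3..b j3} {a j4..b j4} \<noteq> {} \<Longrightarrow>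
      \<not> (j1 = j2 \<and> j2 = j3 \<and> j3 = j4) \<Longrightarrow>
      vec s (\<lambda>i. of_int ((if i = j1 then 1 else 0) + (if i = j2 then 1 else 0)
                               - (if i = j3 then 1 else 0) - (if i = j4 then 1 else 0))) \<in> set (S_rows s a b)"
  unfolding S_rows_def
  apply (simp del: of_int_add of_int_diff)
  apply (rule bexI[where x=j1], rule bexI[where x=j2], rule bexI[where x=j3], rule bexI[where x=j4])
  by auto

lemma row_prod:
  fixes w :: "nat \<Rightarrow> rat"
  assumes "j1 < s" "j2 < s" "j3 < s" "j4 < s"
  shows "vec s (\<lambda>i. of_int ((if i = j1 then 1 else 0) + (if i = j2 then 1 else 0)
                               - (if i = j3 then 1 else 0) - (if i = j4 then 1 else 0))) \<bullet> vec s w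
     = w j1 + w j2 - w j3 - w j4"
proof -
  have e: "of_int ((if i = j1 then 1 else 0) + (if i = j2 then 1 else 0)
                               - (if i = j3 then 1 else 0) - (if i = j4 then 1 else 0)) * w i
     = (if i = j1 then w i else 0) + (if i = j2 then w i else 0) - (if i = j3 then w i else 0) - (if i = j4 then w i else 0)" for i
    by (simp add: algebra_simps mult_2)
  have "vec s (\<lambda>i. of_int ((if i = j1 then 1 else 0) + (if i = j2 then 1 else 0)
                               - (if i = j3 then 1 else 0) - (if i = j4 then 1 else 0))) \<bullet> vec s w
    = (\<Sum>i\<in>{0..<s}. (if i = j1 then w i else 0) + (if i = j2 then w i else 0) - (if i = j3 then w i else 0) - (if i = j4 then w i else 0))"
    unfolding scalar_prod_def by (simp only: dim_vec index_vec e cong: sum.cong) (rule sum.cong; simp add: e)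
  also have "\<dots> = w j1 + w j2 - w j3 - w j4"
    using assms by (simp add: sum.distrib sum_subtractf)
  finally show ?thesis .
qed

lemma S_carrier: "S_mat s a b \<in> carrier_mat (length (S_rows s a b)) s"
  unfolding S_mat_def by (simp add: mat_of_rows_def)

lemma kerS_iff: fixes w :: "nat \<Rightarrow> rat" shows "S_mat s a b *\<^sub>v vec s w = 0\<^sub>v (length (S_rows s a b)) \<longleftrightarrow> kerS s a b w"
proof -
  have rows: "set (S_rows s a b) \<subseteq> carrier_vec s" using memS1 by fastforce
  have "S_mat s a b *\<^sub>v vec s w = 0\<^sub>v (length (S_rows s a b)) \<longleftrightarrow> (\<forall>r\<in>set (S_rows s a b). r \<bullet> vec s w = 0)"
  proof
    assume h: "S_mat s a b *\<^sub>v vec s w = 0\<^sub>v (length (S_rows s a b))"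
    show "\<forall>r\<in>set (S_rows s a b). r \<bullet> vec s w = 0"
    proof
      fix r assume "r \<in> set (S_rows s a b)"
      then obtain k where k: "k < length (S_rows s a b)" "r = S_rows s a b ! k" by (metis in_set_conv_nth)
      have "(S_mat s a b *\<^sub>v vec s w) $ k = r \<bullet> vec s w"
        using k rows nth_mem[OF k(1)] unfolding S_mat_def by (simp add: mat_of_rows_row subset_iff)
      thus "r \<bullet> vec s w = 0" using h k by simp
    qed
  next
    assume h: "\<forall>r\<in>set (S_rows s a b). r \<bullet> vec s w = 0"
    show "S_mat s a b *\<^sub>v vec s w = 0\<^sub>v (length (S_rows s a b))"
    proof (rule eq_vecI)
      fix k assume "k < dim_vec (0\<^sub>v (length (S_rows s a b)) :: rat vec)"
      hence k: "k < length (S_rows s a b)" by simp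
      have "(S_mat s a b *\<^sub>v vec s w) $ k = S_rows s a b ! k \<bullet> vec s w"
        using k rows nth_mem[OF k(1)] unfolding S_mat_def by (simp add: mat_of_rows_row subset_iff)
      thus "(S_mat s a b *\<^sub>v vec s w) $ k = 0\<^sub>v (length (S_rows s a b)) $ k" using h k by simp
    qed (simp add: S_mat_def)
  qed
  also have "\<dots> \<longleftrightarrow> kerS s a b w"
  proof
    assume h: "\<forall>r\<in>set (S_rows s a b). r \<bullet> vec s w = 0"
    show "kerS s a b w" unfolding kerS_def
    proof (intro allI impI)
      fix j1 j2 j3 j4 assume j: "j1 < s" "j2 < s" "j3 < s" "j4 < s"
        and c: "sumset {a j1..b j1} {a j2..b j2} \<inter> sumset {a j3..b j3} {a j4..b j4} \<noteq> {}"
      show "w j1 + w j2 = w j3 + w j4"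
      proof (cases "j1 = j2 \<and> j2 = j3 \<and> j3 = j4")
        case False
        have "w j1 + w j2 - w j3 - w j4 = 0" using bspec[OF h memS2[OF j c False]] unfolding row_prod[OF j] .
        thus ?thesis by simp
      qed auto
    qed
  next
    assume h: "kerS s a b w"
    show "\<forall>r\<in>set (S_rows s a b). r \<bullet> vec s w = 0"
    proof
      fix r assume "r \<in> set (S_rows s a b)"
      from memS1[OF this] obtain j1 j2 j3 j4 where j: "j1 < s" "j2 < s" "j3 < s" "j4 < s"
        and c: "sumset {a j1..b j1} {a j2..b j2} \<inter> sumset {a j3..b j3} {a j4..b j4} \<noteq> {}"
        and r: "r = vec s (\<lambda>i. of_int ((if i = j1 then 1 else 0) + (if i = j2 then 1 else 0)
                               - (if i = j3 then 1 else 0) - (if i = j4 then 1 else 0)))" by (elim exE conjE) (rule that)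
      have "w j1 + w j2 = w j3 + w j4" using h j c unfolding kerS_def by blast
      thus "r \<bullet> vec s w = 0" unfolding r row_prod[OF j] by simp
    qed
  qed
  finally show ?thesis .
qed

lemma seg_order:
  fixes i j s :: nat and a b :: "nat \<Rightarrow> int"
  assumes gaps: "\<And>i. i + 1 < s \<Longrightarrow> b i + 1 < a (i + 1)"
    and seg: "\<And>i. i < s \<Longrightarrow> a i \<le> b i"
  shows "i < j \<Longrightarrow> j < s \<Longrightarrow> b i < a j"
proof (induction j)
  case 0 thus ?case by simp
next
  case (Suc j)
  show ?case
  proof (cases "i = j")
    case True
    have "b j + 1 < a (Suc j)" using gaps[of j] Suc by simp
    thus ?thesis using True by simp
  next
    case False
    hence "b i < a j" using Suc by simp
    also have "a j \<le> b j" using seg[of j] Suc by simp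
    also have "b j < a (Suc j)" using gaps[of j] Suc by simp
    finally show ?thesis .
  qed
qed

lemma seg_unique:
  fixes i j s :: nat and a b :: "nat \<Rightarrow> int"
  assumes gaps: "\<And>i. i + 1 < s \<Longrightarrow> b i + 1 < a (i + 1)"
    and seg: "\<And>i. i < s \<Longrightarrow> a i \<le> b i"
    and "i < s" "j < s" "x \<in> {a i..b i}" "x \<in> {a j..b j}"
  shows "i = j"
proof (rule ccontr)
  assume "i \<noteq> j"
  hence "i < j \<or> j < i" by auto
  thus False using seg_order[where s=s and a=a and b=b, OF gaps seg, of i j] seg_order[where s=s and a=a and b=b, OF gaps seg, of j i] assms(3-6) by auto
qed

lemma hom_form:
  fixes \<psi> :: "int \<Rightarrow> int"
  assumes hom: "\<And>x y z t. x \<in> A \<Longrightarrow> y \<in> A \<Longrightarrow> z \<in> A \<Longrightarrow> t \<in> A \<Longrightarrow> x + y = z + t \<Longrightarrow> \<psi> x + \<psi> y = \<psi> z + \<psi> t"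
    and x0: "x0 \<in> A" "x0 + 1 \<in> A"
    and sub: "{p..q} \<subseteq> A" and x: "x \<in> {p..q}"
  shows "\<psi> x = \<psi> p + (x - p) * (\<psi> (x0 + 1) - \<psi> x0)"
proof -
  let ?v = "\<psi> (x0 + 1) - \<psi> x0"
  have step: "\<psi> (y + 1) = \<psi> y + ?v" if "y \<in> A" "y + 1 \<in> A" for y
    using hom[OF that(1) x0(2) that(2) x0(1)] by simp
  have "p + int n \<le> q \<longrightarrow> \<psi> (p + int n) = \<psi> p + int n * ?v" for n :: nat
  proof (induction n)
    case 0 show ?case by simp
  next
    case (Suc n)
    show ?case
    proof
      assume h: "p + int (Suc n) \<le> q"
      have "p + int n \<in> A" "p + int n + 1 \<in> A" using h sub by auto
      hence "\<psi> (p + int n + 1) = \<psi> (p + int n) + ?v" by (rule step)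
      thus "\<psi> (p + int (Suc n)) = \<psi> p + int (Suc n) * ?v" using Suc h by (simp add: algebra_simps)
    qed
  qed
  from this[of "nat (x - p)"] show ?thesis using x by simp
qed

lemma dep:
  fixes y :: "'i \<Rightarrow> 'j \<Rightarrow> rat"
  assumes "finite F" "finite I" "card F < card I"
  shows "\<exists>c. (\<exists>i\<in>I. c i \<noteq> 0) \<and> (\<forall>j\<in>F. (\<Sum>i\<in>I. c i * y i j) = 0)"
  using assms
proof (induction F arbitrary: I y rule: finite_induct)
  case empty
  then obtain i where "i \<in> I" by fastforce
  thus ?case by (intro exI[of _ "\<lambda>_. 1"]) auto
next
  case (insert f F)
  show ?case
  proof (cases "\<forall>i\<in>I. y i f = 0")
    case True
    from insert.IH[of I y] insert.prems insert.hyps obtain c where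
      "\<exists>i\<in>I. c i \<noteq> 0" "\<forall>j\<in>F. (\<Sum>i\<in>I. c i * y i j) = 0" by auto
    thus ?thesis using True by (intro exI[of _ c]) auto
  next
    case False
    then obtain i0 where i0: "i0 \<in> I" "y i0 f \<noteq> 0" by auto
    define I' where "I' = I - {i0}"
    define y' where "y' i j = y i j - (y i f / y i0 f) * y i0 j" for i j
    have cI: "card F < card I'" using insert.prems insert.hyps i0 unfolding I'_def by auto
    from insert.IH[of I' y'] cI insert.prems obtain c' where
      c': "\<exists>i\<in>I'. c' i \<noteq> 0" "\<forall>j\<in>F. (\<Sum>i\<in>I'. c' i * y' i j) = 0" unfolding I'_def by auto
    define c where "c i = (if i = i0 then - (\<Sum>k\<in>I'. c' k * (y k f / y i0 f)) else c' i)" for i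
    have key: "(\<Sum>i\<in>I. c i * y i j) = (\<Sum>i\<in>I'. c' i * y' i j)" for j
    proof -
      have e1: "(\<Sum>i\<in>I. c i * y i j) = c i0 * y i0 j + (\<Sum>i\<in>I'. c i * y i j)"
        unfolding I'_def using i0 insert.prems by (simp add: sum.remove)
      have e2: "(\<Sum>i\<in>I'. c i * y i j) = (\<Sum>i\<in>I'. c' i * y i j)"
        unfolding c_def I'_def by (auto intro!: sum.cong)
      have e3: "(\<Sum>i\<in>I'. c' i * y' i j) = (\<Sum>i\<in>I'. c' i * y i j) - (\<Sum>k\<in>I'. c' k * (y k f / y i0 f)) * y i0 j"
        unfolding y'_def by (simp add: right_diff_distrib sum_subtractf sum_distrib_right mult.assoc)
      show ?thesis unfolding e1 e2 e3 unfolding c_def by simp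
    qed
    have "\<forall>j\<in>insert f F. (\<Sum>i\<in>I. c i * y i j) = 0"
    proof
      fix j assume "j \<in> insert f F"
      then consider "j = f" | "j \<in> F" by auto
      thus "(\<Sum>i\<in>I. c i * y i j) = 0"
      proof cases
        case 1 thus ?thesis unfolding key y'_def using i0 by simp
      next
        case 2 thus ?thesis unfolding key using c' by simp
      qed
    qed
    moreover have "\<exists>i\<in>I. c i \<noteq> 0" using c' unfolding c_def I'_def by auto
    ultimately show ?thesis by blast
  qed
qed

lemma common_denom:
  fixes w :: "nat \<Rightarrow> rat"
  shows "\<exists>N::int. N > 0 \<and> (\<exists>z::nat \<Rightarrow> int. \<forall>j<s. of_int (z j) = of_int N * w j)"
proof (induction s)
  case 0 show ?case by (intro exI[of _ 1]) auto
next
  case (Suc s)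
  then obtain N z where N: "N > 0" "\<forall>j<s. of_int (z j) = of_int N * w j" by auto
  obtain p q where pq: "quotient_of (w s) = (p, q)" by force
  have q: "q > 0" using quotient_of_denom_pos[OF pq] .
  have ws: "w s = of_int p / of_int q" using quotient_of_div[OF pq] .
  define z' where "z' j = (if j < s then z j * q else N * p)" for j
  have "\<forall>j<Suc s. of_int (z' j) = of_int (N * q) * w j"
  proof (intro allI impI)
    fix j assume "j < Suc s"
    then consider "j < s" | "j = s" by linarith
    thus "of_int (z' j) = of_int (N * q) * w j"
    proof cases
      case 1 thus ?thesis using N unfolding z'_def by (simp add: algebra_simps)
    next
      case 2 thus ?thesis using q ws unfolding z'_def by simp
    qed
  qed
  thus ?case using N q by (intro exI[of _ "N * q"]) auto
qed

lemma kerS_lin: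
  fixes W :: "'i \<Rightarrow> nat \<Rightarrow> rat"
  assumes "\<And>i. i \<in> I \<Longrightarrow> kerS s a b (W i)"
  shows "kerS s a b (\<lambda>j. (\<Sum>i\<in>I. c i * W i j) - l)"
  unfolding kerS_def
proof (intro allI impI)
  fix j1 j2 j3 j4 assume j: "j1 < s" "j2 < s" "j3 < s" "j4 < s"
    and c: "sumset {a j1..b j1} {a j2..b j2} \<inter> sumset {a j3..b j3} {a j4..b j4} \<noteq> {}"
  have "(\<Sum>i\<in>I. c i * W i j1) + (\<Sum>i\<in>I. c i * W i j2) = (\<Sum>i\<in>I. c i * (W i j1 + W i j2))"
    by (simp add: sum.distrib distrib_left)
  also have "\<dots> = (\<Sum>i\<in>I. c i * (W i j3 + W i j4))"
    using assms j c unfolding kerS_def by (intro sum.cong) auto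
  also have "\<dots> = (\<Sum>i\<in>I. c i * W i j3) + (\<Sum>i\<in>I. c i * W i j4)"
    by (simp add: sum.distrib distrib_left)
  finally show "(\<Sum>i\<in>I. c i * W i j1) - l + ((\<Sum>i\<in>I. c i * W i j2) - l) =
       (\<Sum>i\<in>I. c i * W i j3) - l + ((\<Sum>i\<in>I. c i * W i j4) - l)" by simp
qed

lemma upper:
  fixes A :: "int set" and s :: nat and a b :: "nat \<Rightarrow> int" and B :: "(nat \<Rightarrow> int) set"
  assumes A_def: "A = (\<Union>i<s. {a i..b i})"
    and j0: "j0 < s" "a j0 < b j0"
    and Fii: "\<And>w. kerS s a b w \<Longrightarrow> (\<forall>f\<in>F. w f = 0) \<Longrightarrow> \<forall>j<s. w j = 0"
    and F1: "F \<subseteq> {..<s}" and f0: "f0 \<in> F"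
    and B: "B \<subseteq> intvecs d" "\<not> in_hyperplane d B" "freiman_iso2 A B"
  shows "d \<le> card F"
proof (rule ccontr)
  assume "\<not> d \<le> card F"
  hence dF: "card F < card {..<d}" by simp
  have finF: "finite F" using F1 finite_subset by blast
  obtain \<phi> where bij: "bij_betw \<phi> A B" and
    iso: "\<forall>x\<in>A. \<forall>y\<in>A. \<forall>z\<in>A. \<forall>t\<in>A. x + y = z + t \<longleftrightarrow> \<phi> x + \<phi> y = \<phi> z + \<phi> t"
    using B(3) unfolding freiman_iso2_def by blast
  have hom: "\<phi> x i + \<phi> y i = \<phi> z i + \<phi> t i"
    if "x \<in> A" "y \<in> A" "z \<in> A" "t \<in> A" "x + y = z + t" for x y z t i
  proof -
    have "\<phi> x + \<phi> y = \<phi> z + \<phi> t" using iso that by blast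
    hence "(\<phi> x + \<phi> y) i = (\<phi> z + \<phi> t) i" by simp
    thus ?thesis by simp
  qed
  have segA: "{a j..b j} \<subseteq> A" if "j < s" for j using that A_def by auto
  have x0: "a j0 \<in> A" "a j0 + 1 \<in> A" using segA[OF j0(1)] j0 by auto
  define v where "v i = \<phi> (a j0 + 1) i - \<phi> (a j0) i" for i
  define W where "W i j = rat_of_int (\<phi> (a j) i - a j * v i)" for i j
  have form: "rat_of_int (\<phi> x i) = W i j + of_int x * of_int (v i)"
    if "j < s" "x \<in> {a j..b j}" for x i j
  proof -
    have "\<phi> x i = \<phi> (a j) i + (x - a j) * v i"
      unfolding v_def by (rule hom_form[where A=A and \<psi>="\<lambda>x. \<phi> x i", OF hom x0 segA[OF that(1)] that(2)])
    hence "rat_of_int (\<phi> x i) = rat_of_int (\<phi> (a j) i + (x - a j) * v i)" by (rule arg_cong)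
    thus ?thesis unfolding W_def by (simp add: algebra_simps)
  qed
  have kerW: "kerS s a b (W i)" for i
    unfolding kerS_def
  proof (intro allI impI)
    fix j1 j2 j3 j4 assume j: "j1 < s" "j2 < s" "j3 < s" "j4 < s"
      and c: "sumset {a j1..b j1} {a j2..b j2} \<inter> sumset {a j3..b j3} {a j4..b j4} \<noteq> {}"
    then obtain n where "n \<in> sumset {a j1..b j1} {a j2..b j2}" "n \<in> sumset {a j3..b j3} {a j4..b j4}" by blast
    then obtain x y z t where xyzt: "x \<in> {a j1..b j1}" "y \<in> {a j2..b j2}" "z \<in> {a j3..b j3}" "t \<in> {a j4..b j4}"
      "x + y = z + t" unfolding sumset_def by auto
    have inA: "x \<in> A" "y \<in> A" "z \<in> A" "t \<in> A"
      using segA[OF j(1)] segA[OF j(2)] segA[OF j(3)] segA[OF j(4)] xyzt by auto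
    have "\<phi> x i + \<phi> y i = \<phi> z i + \<phi> t i" by (rule hom[OF inA xyzt(5)])
    hence e0: "rat_of_int (\<phi> x i) + rat_of_int (\<phi> y i) = rat_of_int (\<phi> z i) + rat_of_int (\<phi> t i)"
      by (metis of_int_add)
    have e1: "W i j1 + of_int x * of_int (v i) + (W i j2 + of_int y * of_int (v i)) =
           W i j3 + of_int z * of_int (v i) + (W i j4 + of_int t * of_int (v i))"
      using e0 unfolding form[OF j(1) xyzt(1)] form[OF j(2) xyzt(2)] form[OF j(3) xyzt(3)] form[OF j(4) xyzt(4)] .
    have "rat_of_int x + of_int y = of_int z + of_int t" using xyzt(5) by (metis of_int_add)
    hence e2: "rat_of_int x * of_int (v i) + of_int y * of_int (v i) = of_int z * of_int (v i) + of_int t * of_int (v i)"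
      by (metis distrib_right)
    show "W i j1 + W i j2 = W i j3 + W i j4" using e1 e2 by linarith
  qed
  define y where "y i j = (if j = f0 then of_int (v i) else W i j - W i f0)" for i j
  obtain c where c: "\<exists>i\<in>{..<d}. c i \<noteq> 0" "\<forall>j\<in>F. (\<Sum>i\<in>{..<d}. c i * y i j) = 0"
    using dep[OF finF _ dF, of y] by auto
  define l where "l = (\<Sum>i<d. c i * W i f0)"
  have kw: "kerS s a b (\<lambda>j. (\<Sum>i<d. c i * W i j) - l)" by (rule kerS_lin) (rule kerW)
  have "\<forall>j<s. (\<Sum>i<d. c i * W i j) - l = 0"
  proof (rule Fii[OF kw], intro ballI)
    fix f assume f: "f \<in> F"
    show "(\<Sum>i<d. c i * W i f) - l = 0"
    proof (cases "f = f0")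
      case True thus ?thesis unfolding l_def by simp
    next
      case False
      have "0 = (\<Sum>i<d. c i * y i f)" using c(2) f by simp
      also have "\<dots> = (\<Sum>i<d. c i * W i f) - l" using False unfolding y_def l_def
        by (simp add: right_diff_distrib sum_subtractf)
      finally show ?thesis by simp
    qed
  qed
  hence wl: "(\<Sum>i<d. c i * W i j) = l" if "j < s" for j using that by simp
  have cv: "(\<Sum>i<d. c i * of_int (v i)) = 0" using bspec[OF c(2) f0] unfolding y_def by simp
  have "in_hyperplane d B" unfolding in_hyperplane_def
  proof (rule exI[of _ "\<lambda>i. real_of_rat (c i)"], rule exI[of _ "real_of_rat l"], intro conjI)
    show "\<exists>i<d. real_of_rat (c i) \<noteq> 0" using c(1) by auto
    show "\<forall>bb\<in>B. (\<Sum>i<d. real_of_rat (c i) * real_of_int (bb i)) = real_of_rat l"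
    proof
      fix bb assume "bb \<in> B"
      then obtain x where x: "x \<in> A" "bb = \<phi> x" using bij by (metis bij_betw_imp_surj_on imageE)
      then obtain j where j: "j < s" "x \<in> {a j..b j}" using A_def by auto
      have "(\<Sum>i<d. c i * of_int (\<phi> x i)) = (\<Sum>i<d. c i * W i j + of_int x * (c i * of_int (v i)))"
        using form[OF j] by (simp add: algebra_simps)
      also have "\<dots> = l" using wl[OF j(1)] cv by (simp add: sum.distrib sum_distrib_left[symmetric])
      finally have e: "(\<Sum>i<d. c i * of_int (\<phi> x i)) = l" .
      have "(\<Sum>i<d. real_of_rat (c i) * real_of_int (bb i)) = real_of_rat (\<Sum>i<d. c i * of_int (\<phi> x i))"
        unfolding x(2) by (simp add: of_rat_sum of_rat_mult)
      thus "(\<Sum>i<d. real_of_rat (c i) * real_of_int (bb i)) = real_of_rat l" using e by simp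
    qed
  qed
  thus False using B(2) by simp
qed

lemma intker:
  fixes w :: "nat \<Rightarrow> rat"
  assumes F1: "F \<subseteq> {..<s}" and f: "f \<in> F" and kw: "kerS s a b w" and w1: "w f = 1"
    and w0: "\<forall>f'\<in>F. f' \<noteq> f \<longrightarrow> w f' = 0"
  shows "\<exists>u::nat\<Rightarrow>int. kerS s a b (\<lambda>j. of_int (u j)) \<and> u f \<noteq> 0 \<and> (\<forall>f'\<in>F. f' \<noteq> f \<longrightarrow> u f' = 0)"
proof -
  obtain N z where N: "N > 0" "\<forall>j<s. rat_of_int (z j) = of_int N * w j" using common_denom[of s w] by auto
  have "kerS s a b (\<lambda>j. of_int (z j))" unfolding kerS_def
  proof (intro allI impI)
    fix j1 j2 j3 j4 assume j: "j1 < s" "j2 < s" "j3 < s" "j4 < s"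
      and c: "sumset {a j1..b j1} {a j2..b j2} \<inter> sumset {a j3..b j3} {a j4..b j4} \<noteq> {}"
    have "w j1 + w j2 = w j3 + w j4" using kw j c unfolding kerS_def by blast
    hence "of_int N * w j1 + of_int N * w j2 = of_int N * w j3 + of_int N * w j4"
      by (metis distrib_left)
    thus "rat_of_int (z j1) + of_int (z j2) = of_int (z j3) + of_int (z j4)" using N(2) j by simp
  qed
  moreover have "z f \<noteq> 0" using N f F1 w1 by (metis lessThan_iff mult_1_right of_int_0 of_int_eq_iff less_irrefl subsetD)
  moreover have "\<forall>f'\<in>F. f' \<noteq> f \<longrightarrow> z f' = 0" using N F1 w0
    by (metis lessThan_iff mult_zero_right of_int_0_eq_iff subsetD)
  ultimately show ?thesis by blast
qed

lemma lower:
  fixes A :: "int set" and s :: nat and a b :: "nat \<Rightarrow> int"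
  assumes seg: "\<And>i. i < s \<Longrightarrow> a i \<le> b i"
    and gaps: "\<And>i. i + 1 < s \<Longrightarrow> b i + 1 < a (i + 1)"
    and A_def: "A = (\<Union>i<s. {a i..b i})"
    and j0: "j0 < s" "a j0 < b j0"
    and F1: "F \<subseteq> {..<s}" and f0: "f0 \<in> F"
    and Fi: "\<And>f. f \<in> F \<Longrightarrow> \<exists>u::nat\<Rightarrow>int. kerS s a b (\<lambda>j. of_int (u j)) \<and> u f \<noteq> 0 \<and> (\<forall>f'\<in>F. f' \<noteq> f \<longrightarrow> u f' = 0)"
  shows "\<exists>B. B \<subseteq> intvecs (card F) \<and> \<not> in_hyperplane (card F) B \<and> freiman_iso2 A B"
proof -
  define d where "d = card F"
  have finF: "finite F" using F1 finite_subset by blast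
  define F' where "F' = F - {f0}"
  define fs where "fs = sorted_list_of_set F'"
  have finF': "finite F'" using finF F'_def by simp
  have fs: "set fs = F'" "distinct fs" using finF' unfolding fs_def by auto
  have cpos: "card F > 0" using finF f0 card_gt_0_iff by auto
  have d: "d = Suc (length fs)"
    using fs finF f0 cpos unfolding d_def F'_def by (simp add: distinct_card[symmetric] card_Suc_Diff1)
  have fsF: "fs ! k \<in> F" "fs ! k \<noteq> f0" if "k < length fs" for k
    using fs that nth_mem[OF that] unfolding F'_def by auto
  define U where "U f = (SOME u::nat\<Rightarrow>int. kerS s a b (\<lambda>j. of_int (u j)) \<and> u f \<noteq> 0 \<and> (\<forall>f'\<in>F. f' \<noteq> f \<longrightarrow> u f' = 0))" for f
  have U: "kerS s a b (\<lambda>j. of_int (U f j)) \<and> U f f \<noteq> 0 \<and> (\<forall>f'\<in>F. f' \<noteq> f \<longrightarrow> U f f' = 0)" if "f \<in> F" for f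
    unfolding U_def using someI_ex[OF Fi[OF that]] .
  define sg where "sg x = (THE j. j < s \<and> x \<in> {a j..b j})" for x
  have sg_eq: "sg x = j" if "j < s" "x \<in> {a j..b j}" for x j
    unfolding sg_def
    by (rule the_equality) (use that seg_unique[where s=s and a=a and b=b, OF gaps seg] in blast)+
  have sgA: "sg x < s \<and> x \<in> {a (sg x)..b (sg x)}" if xA: "x \<in> A" for x
  proof -
    obtain j where "j < s" "x \<in> {a j..b j}" using xA A_def by auto
    thus ?thesis using sg_eq by simp
  qed
  define \<phi> where "\<phi> x = (\<lambda>i. if i = 0 then x else if i < d then U (fs ! (i - 1)) (sg x) else 0)" for x
  define B where "B = \<phi> ` A"
  have Bint: "B \<subseteq> intvecs d" unfolding B_def intvecs_def \<phi>_def using d by auto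
  have inj: "inj_on \<phi> A"
  proof (rule inj_onI)
    fix x y assume "\<phi> x = \<phi> y"
    hence "\<phi> x 0 = \<phi> y 0" by simp
    thus "x = y" unfolding \<phi>_def by simp
  qed
  have iso: "x + y = z + t \<longleftrightarrow> \<phi> x + \<phi> y = \<phi> z + \<phi> t"
    if xyzt: "x \<in> A" "y \<in> A" "z \<in> A" "t \<in> A" for x y z t
  proof
    assume "\<phi> x + \<phi> y = \<phi> z + \<phi> t"
    hence "(\<phi> x + \<phi> y) 0 = (\<phi> z + \<phi> t) 0" by simp
    thus "x + y = z + t" unfolding \<phi>_def by simp
  next
    assume e: "x + y = z + t"
    show "\<phi> x + \<phi> y = \<phi> z + \<phi> t"
    proof (rule ext)
      fix i
      show "(\<phi> x + \<phi> y) i = (\<phi> z + \<phi> t) i"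
      proof (cases "i = 0 \<or> \<not> i < d")
        case True thus ?thesis using e unfolding \<phi>_def by auto
      next
        case False
        hence i: "i \<noteq> 0" "i < d" by auto
        define f where "f = fs ! (i - 1)"
        have fF: "f \<in> F" using fsF i d unfolding f_def by auto
        have ss: "sumset {a (sg x)..b (sg x)} {a (sg y)..b (sg y)} \<inter> sumset {a (sg z)..b (sg z)} {a (sg t)..b (sg t)} \<noteq> {}"
        proof -
          have "x + y \<in> sumset {a (sg x)..b (sg x)} {a (sg y)..b (sg y)}"
            unfolding sumset_def using sgA xyzt by blast
          moreover have "x + y \<in> sumset {a (sg z)..b (sg z)} {a (sg t)..b (sg t)}"
            unfolding sumset_def e using sgA xyzt by blast
          ultimately show ?thesis by blast
        qed
        have "rat_of_int (U f (sg x)) + of_int (U f (sg y)) = of_int (U f (sg z)) + of_int (U f (sg t))"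
          using conjunct1[OF U[OF fF]] sgA[OF xyzt(1)] sgA[OF xyzt(2)] sgA[OF xyzt(3)] sgA[OF xyzt(4)] ss
          unfolding kerS_def by blast
        hence "U f (sg x) + U f (sg y) = U f (sg z) + U f (sg t)" by (metis of_int_add of_int_eq_iff)
        thus ?thesis using i unfolding \<phi>_def f_def by simp
      qed
    qed
  qed
  have fiso: "freiman_iso2 A B"
    unfolding freiman_iso2_def B_def
    using inj iso by (intro exI[of _ \<phi>] conjI) (auto simp: bij_betw_def)
  have nh: "\<not> in_hyperplane d B"
  proof
    assume "in_hyperplane d B"
    then obtain c :: "nat \<Rightarrow> real" and \<alpha> where c: "\<exists>i<d. c i \<noteq> 0"
      and h: "\<forall>bb\<in>B. (\<Sum>i<d. c i * real_of_int (bb i)) = \<alpha>" unfolding in_hyperplane_def by blast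
    define n where "n = length fs"
    define h where "h j = (\<Sum>k<n. c (Suc k) * of_int (U (fs ! k) j))" for j
    have E: "c 0 * of_int x + h (sg x) = \<alpha>" if "x \<in> A" for x
    proof -
      have "\<alpha> = (\<Sum>i<d. c i * real_of_int (\<phi> x i))" using h that unfolding B_def by auto
      also have "\<dots> = c 0 * of_int x + (\<Sum>k<n. c (Suc k) * real_of_int (\<phi> x (Suc k)))"
        unfolding d n_def sum.lessThan_Suc_shift by (simp add: \<phi>_def)
      also have "(\<Sum>k<n. c (Suc k) * real_of_int (\<phi> x (Suc k))) = h (sg x)"
        unfolding h_def \<phi>_def using d n_def by (intro sum.cong) auto
      finally show ?thesis by simp
    qed
    have segA: "{a j..b j} \<subseteq> A" if "j < s" for j using that A_def by auto
    have x0: "a j0 \<in> A" "a j0 + 1 \<in> A" using segA[OF j0(1)] j0 by auto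
    have "sg (a j0) = j0" "sg (a j0 + 1) = j0" using sg_eq j0 seg by auto
    hence c0: "c 0 = 0" using E[OF x0(1)] E[OF x0(2)] by (simp add: algebra_simps)
    have f0s: "f0 < s" using F1 f0 by auto
    have "sg (a f0) = f0" using sg_eq f0s seg by auto
    moreover have "h f0 = 0" unfolding h_def
    proof (intro sum.neutral ballI)
      fix k assume "k \<in> {..<n}"
      hence k: "k < length fs" using n_def by simp
      have "\<forall>f'\<in>F. f' \<noteq> fs ! k \<longrightarrow> U (fs ! k) f' = 0" using U[OF fsF(1)[OF k]] by blast
      hence "U (fs ! k) f0 = 0" using f0 fsF(2)[OF k] by metis
      thus "c (Suc k) * real_of_int (U (fs ! k) f0) = 0" by simp
    qed
    moreover have "a f0 \<in> A" using segA[OF f0s] seg[OF f0s] by auto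
    ultimately have al: "\<alpha> = 0" using E c0 by fastforce
    have ck: "c (Suc k) = 0" if k: "k < n" for k
    proof -
      let ?f = "fs ! k"
      have fF: "?f \<in> F" using fsF k n_def by auto
      have fs': "?f < s" using fF F1 by auto
      have "sg (a ?f) = ?f" using sg_eq fs' seg by auto
      moreover have "a ?f \<in> A" using segA[OF fs'] seg[OF fs'] by auto
      ultimately have "h ?f = 0" using E c0 al by fastforce
      moreover have "h ?f = c (Suc k) * of_int (U ?f ?f)"
        unfolding h_def
      proof (rule sum.remove[where x=k, THEN trans])
        show "finite {..<n}" "k \<in> {..<n}" using k by auto
        have "(\<Sum>k'\<in>{..<n} - {k}. c (Suc k') * real_of_int (U (fs ! k') ?f)) = 0"
        proof (rule sum.neutral, rule ballI)
          fix k' assume "k' \<in> {..<n} - {k}"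
          hence "k' < n" "k' \<noteq> k" by auto
          hence kk: "k' < length fs" "k' \<noteq> k" using n_def by auto
          have "fs ! k' \<noteq> ?f" using nth_eq_iff_index_eq[OF fs(2) kk(1), of k] kk k n_def by simp
          moreover have "fs ! k' \<in> F" using fsF kk by auto
          ultimately have "fs ! k' \<noteq> ?f" "fs ! k' \<in> F" by auto
          thus "c (Suc k') * real_of_int (U (fs ! k') ?f) = 0" using U fF by auto
        qed
        thus "c (Suc k) * real_of_int (U (fs ! k) ?f) + (\<Sum>k'\<in>{..<n} - {k}. c (Suc k') * real_of_int (U (fs ! k') ?f)) =
          c (Suc k) * real_of_int (U ?f ?f)" by simp
      qed
      ultimately show ?thesis using U[OF fF] by simp
    qed
    have "\<forall>i<d. c i = 0"
    proof (intro allI impI)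
      fix i assume "i < d"
      thus "c i = 0" using c0 ck d n_def by (cases i) auto
    qed
    thus False using c by auto
  qed
  show ?thesis using Bint nh fiso unfolding d_def by blast
qed

theorem corollary2p2:
  fixes A :: "int set" and s :: nat and a b :: "nat \<Rightarrow> int"
  assumes seg: "\<And>i. i < s \<Longrightarrow> a i \<le> b i"
    and gaps: "\<And>i. i + 1 < s \<Longrightarrow> b i + 1 < a (i + 1)"
    and nontriv: "\<exists>i<s. a i < b i"
    and A_def: "A = (\<Union>i<s. {a i..b i})"
    and s_ge: "1 \<le> s" and s_le: "s \<le> card A - 1"
  shows "freiman_dim A = s - mat_rank (S_mat s a b)"
proof -
  define m where "m = length (S_rows s a b)"
  have SC: "S_mat s a b \<in> carrier_mat m s" using S_carrier m_def by simp
  obtain F where F1: "F \<subseteq> {..<s}" and cF: "card F = s - vec_space.rank m (S_mat s a b)"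
    and P1: "\<And>f. f \<in> F \<Longrightarrow> \<exists>w. S_mat s a b *\<^sub>v vec s w = 0\<^sub>v m \<and> w f = 1 \<and> (\<forall>f'\<in>F. f' \<noteq> f \<longrightarrow> w f' = 0)"
    and P2: "\<And>w. S_mat s a b *\<^sub>v vec s w = 0\<^sub>v m \<Longrightarrow> (\<forall>f\<in>F. w f = 0) \<Longrightarrow> \<forall>j<s. w j = 0"
    using core[OF SC] by blast
  have rk: "mat_rank (S_mat s a b) = vec_space.rank m (S_mat s a b)"
    unfolding mat_rank_def using SC by simp
  have Fii: "\<forall>j<s. w j = 0" if "kerS s a b w" "\<forall>f\<in>F. w f = 0" for w
    using P2[of w] that kerS_iff[of s a b w] m_def by simp
  have Fi: "\<exists>u::nat\<Rightarrow>int. kerS s a b (\<lambda>j. of_int (u j)) \<and> u f \<noteq> 0 \<and> (\<forall>f'\<in>F. f' \<noteq> f \<longrightarrow> u f' = 0)"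
    if f: "f \<in> F" for f
  proof -
    obtain w where w: "S_mat s a b *\<^sub>v vec s w = 0\<^sub>v m" "w f = 1" "\<forall>f'\<in>F. f' \<noteq> f \<longrightarrow> w f' = 0"
      using P1[OF f] by blast
    have "kerS s a b w" using w(1) kerS_iff[of s a b w] m_def by simp
    thus ?thesis using intker[OF F1 f _ w(2) w(3)] by blast
  qed
  obtain j0 where j0: "j0 < s" "a j0 < b j0" using nontriv by blast
  have "F \<noteq> {}"
  proof
    assume "F = {}"
    have "kerS s a b (\<lambda>_. 1)" unfolding kerS_def by simp
    hence "\<forall>j<s. (1::rat) = 0" using Fii[of "\<lambda>_. 1"] \<open>F = {}\<close> by simp
    thus False using s_ge by auto
  qed
  then obtain f0 where f0: "f0 \<in> F" by blast
  have "freiman_dim A = card F"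
    unfolding freiman_dim_def
  proof (rule Greatest_equality)
    show "\<exists>B. B \<subseteq> intvecs (card F) \<and> \<not> in_hyperplane (card F) B \<and> freiman_iso2 A B"
      by (rule lower[OF seg gaps A_def j0 F1 f0 Fi])
    fix d assume "\<exists>B. B \<subseteq> intvecs d \<and> \<not> in_hyperplane d B \<and> freiman_iso2 A B"
    then obtain B where "B \<subseteq> intvecs d" "\<not> in_hyperplane d B" "freiman_iso2 A B" by blast
    thus "d \<le> card F" using upper[OF A_def j0 Fii F1 f0] by blast
  qed
  thus ?thesis using cF rk by simp
qed

end
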